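(* Let $p\in(0,1)$. For $n\ge1$ let $D_n$ be the random subset of an $n\times n$ square of $\mathbb{Z}^2$ obtained by keeping each vertex independently with probability $p$. Then there exists a constant $\alpha_p>0$ such that $\mathbb{E}\left[\ell_{\mathrm{TS}}(D_n)\right]/n^2\to\alpha_p$ as $n\to\infty$.
   Context: For a finite set $V\subseteq\mathbb{Z}^2$, $\ell_{\mathrm{TS}}(V)$ is the length of a shortest path in the standard Cayley graph of $\mathbb{Z}^2$ (generators $e_1,e_2$) visiting every point of $V$, with starting and ending points not prescribed ($\ell_{\mathrm{TS}}(\emptyset)=0$). *)

theory Defs
  imports "HOL-Probability.Probability"
begin

definition grid_adj :: "int \<times> int \<Rightarrow> int \<times> int \<Rightarrow> bool" where
  "grid_adj u v \<longleftrightarrow> \<bar>fst u - fst v\<bar> + \<bar>snd u - snd v\<bar> = 1"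

definition grid_walk :: "(int \<times> int) list \<Rightarrow> bool" where
  "grid_walk w \<longleftrightarrow> w \<noteq> [] \<and> (\<forall>i. Suc i < length w \<longrightarrow> grid_adj (w ! i) (w ! Suc i))"

definition walk_length :: "(int \<times> int) list \<Rightarrow> nat" where
  "walk_length w = length w - 1"

text \<open>Travelling salesman length: shortest walk visiting every point of V,
  free endpoints; 0 for the empty set.\<close>
definition l_TS :: "(int \<times> int) set \<Rightarrow> nat" where
  "l_TS V = (if V = {} then 0
     else (LEAST k. \<exists>w. grid_walk w \<and> V \<subseteq> set w \<and> walk_length w = k))"

definition square :: "nat \<Rightarrow> (int \<times> int) set" where
  "square n = {0..<int n} \<times> {0..<int n}"

definition perc :: "real \<Rightarrow> nat \<Rightarrow> (int \<times> int \<Rightarrow> bool) pmf" where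
  "perc p n = Pi_pmf (square n) False (\<lambda>_. bernoulli_pmf p)"

definition D_set :: "nat \<Rightarrow> (int \<times> int \<Rightarrow> bool) \<Rightarrow> (int \<times> int) set" where
  "D_set n \<omega> = {x \<in> square n. \<omega> x}"

end

theory Submission
  imports Defs
begin


definition d1 :: "int \<times> int \<Rightarrow> int \<times> int \<Rightarrow> int" where
  "d1 u v = \<bar>fst u - fst v\<bar> + \<bar>snd u - snd v\<bar>"

lemma gw_single[simp]: "grid_walk [x]"
  by (simp add: grid_walk_def)

lemma gw_Cons2[simp]: "grid_walk (x # y # w) \<longleftrightarrow> grid_adj x y \<and> grid_walk (y # w)"
  unfolding grid_walk_def
  apply (auto simp: less_Suc_eq_0_disj)
  done

lemma gw_Cons: "grid_walk (x # w) \<longleftrightarrow> (w = [] \<or> (grid_adj x (hd w) \<and> grid_walk w))"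
  by (cases w) auto

lemma gw_append:
  "grid_walk w1 \<Longrightarrow> grid_walk w2 \<Longrightarrow> last w1 = hd w2 \<Longrightarrow> grid_walk (w1 @ tl w2)"
proof (induction w1)
  case Nil then show ?case by (simp add: grid_walk_def)
next
  case (Cons a w1)
  show ?case
  proof (cases w1)
    case Nil
    then show ?thesis using Cons.prems by (cases w2) auto
  next
    case (Cons b w1')
    then show ?thesis using Cons.prems Cons.IH by (auto simp: gw_Cons)
  qed
qed

lemma wl_append:
  "w1 \<noteq> [] \<Longrightarrow> w2 \<noteq> [] \<Longrightarrow> walk_length (w1 @ tl w2) = walk_length w1 + walk_length w2"
  by (cases w1; cases w2) (auto simp: walk_length_def)

lemma set_append_tl:
  "w2 \<noteq> [] \<Longrightarrow> last w1 = hd w2 \<Longrightarrow> w1 \<noteq> [] \<Longrightarrow> set (w1 @ tl w2) = set w1 \<union> set w2"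
  by (cases w2) auto

lemma last_append_tl:
  "w2 \<noteq> [] \<Longrightarrow> last w1 = hd w2 \<Longrightarrow> last (w1 @ tl w2) = last w2"
  by (cases w2) auto

lemma hd_append_tl:
  "w1 \<noteq> [] \<Longrightarrow> hd (w1 @ tl w2) = hd w1"
  by simp

lemma connect_aux:
  "\<forall>a. d1 a b = int d \<longrightarrow> (\<exists>w. grid_walk w \<and> hd w = a \<and> last w = b \<and> walk_length w = d)"
proof (induction d)
  case 0
  show ?case
  proof (intro allI impI)
    fix a assume "d1 a b = int 0"
    then have "a = b" by (auto simp: d1_def prod_eq_iff)
    then show "\<exists>w. grid_walk w \<and> hd w = a \<and> last w = b \<and> walk_length w = 0"
      by (intro exI[of _ "[a]"]) (auto simp: walk_length_def)
  qed
next
  case (Suc d)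
  show ?case
  proof (intro allI impI)
    fix a assume h: "d1 a b = int (Suc d)"
    obtain a' where a': "grid_adj a a'" "d1 a' b = int d"
    proof (cases "fst a < fst b")
      case True
      then show ?thesis using h by (intro that[of "(fst a + 1, snd a)"]) (auto simp: d1_def grid_adj_def)
    next
      case f1: False
      show ?thesis
      proof (cases "fst a > fst b")
        case True
        then show ?thesis using h by (intro that[of "(fst a - 1, snd a)"]) (auto simp: d1_def grid_adj_def)
      next
        case False
        then have e: "fst a = fst b" using f1 by simp
        show ?thesis
        proof (cases "snd a < snd b")
          case True
          then show ?thesis using h e by (intro that[of "(fst a, snd a + 1)"]) (auto simp: d1_def grid_adj_def)
        next
          case False
          then show ?thesis using h e by (intro that[of "(fst a, snd a - 1)"]) (auto simp: d1_def grid_adj_def)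
        qed
      qed
    qed
    with Suc.IH obtain w where w: "grid_walk w" "hd w = a'" "last w = b" "walk_length w = d" by blast
    then have "w \<noteq> []" by (simp add: grid_walk_def)
    then show "\<exists>w. grid_walk w \<and> hd w = a \<and> last w = b \<and> walk_length w = Suc d"
      using w a' by (intro exI[of _ "a # w"]) (auto simp: gw_Cons walk_length_def)
  qed
qed

lemma connect:
  obtains w where "grid_walk w" "hd w = a" "last w = b" "walk_length w = nat (d1 a b)"
proof -
  have "d1 a b \<ge> 0" by (simp add: d1_def)
  then have "d1 a b = int (nat (d1 a b))" by simp
  then show ?thesis using connect_aux[of b "nat (d1 a b)"] that by blast
qed

lemma gw_nonempty: "grid_walk w \<Longrightarrow> w \<noteq> []"
  by (simp add: grid_walk_def)

lemma exists_cover: "finite V \<Longrightarrow> \<exists>w. grid_walk w \<and> V \<subseteq> set w"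
proof (induction rule: finite_induct)
  case empty then show ?case by (intro exI[of _ "[(0,0)]"]) auto
next
  case (insert x F)
  then obtain w where w: "grid_walk w" "F \<subseteq> set w" by blast
  obtain c where c: "grid_walk c" "hd c = last w" "last c = x" "walk_length c = nat (d1 (last w) x)"
    using connect by metis
  have ne: "w \<noteq> []" "c \<noteq> []" using w c gw_nonempty by auto
  have "grid_walk (w @ tl c)" using gw_append w c by simp
  moreover have "insert x F \<subseteq> set (w @ tl c)"
    using set_append_tl[of c w] ne w c by auto
  ultimately show ?case by blast
qed

lemma l_TS_le: "grid_walk w \<Longrightarrow> V \<subseteq> set w \<Longrightarrow> l_TS V \<le> walk_length w"
  unfolding l_TS_def by (auto intro: Least_le)

lemma l_TS_ex:
  assumes "finite V"
  obtains w where "grid_walk w" "V \<subseteq> set w" "walk_length w = l_TS V"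
proof (cases "V = {}")
  case True
  then show ?thesis using that[of "[(0,0)]"] by (auto simp: l_TS_def walk_length_def)
next
  case False
  obtain w0 where "grid_walk w0 \<and> V \<subseteq> set w0" using exists_cover[OF assms] by blast
  then have "\<exists>k w. grid_walk w \<and> V \<subseteq> set w \<and> walk_length w = k" by blast
  from LeastI_ex[OF this] False show ?thesis using that unfolding l_TS_def by auto
qed

lemma gw_tl: "grid_walk w \<Longrightarrow> tl w \<noteq> [] \<Longrightarrow> grid_walk (tl w)"
  by (cases w) (auto simp: gw_Cons)

lemma gw_butlast: "grid_walk w \<Longrightarrow> butlast w \<noteq> [] \<Longrightarrow> grid_walk (butlast w)"
  unfolding grid_walk_def by (auto simp: nth_butlast)

lemma opt_ends:
  assumes w: "grid_walk w" "V \<subseteq> set w" "walk_length w = l_TS V" and ne: "V \<noteq> {}"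
  shows "hd w \<in> V" "last w \<in> V"
proof -
  have wne: "w \<noteq> []" using w gw_nonempty by auto
  show "hd w \<in> V"
  proof (rule ccontr)
    assume nh: "hd w \<notin> V"
    have sw: "set w = insert (hd w) (set (tl w))" using wne by (cases w) auto
    have "tl w \<noteq> []"
    proof
      assume "tl w = []" then have "set w = {hd w}" using sw by simp
      then show False using w(2) nh ne by auto
    qed
    then have "grid_walk (tl w)" using gw_tl w by auto
    moreover have "V \<subseteq> set (tl w)" using w(2) nh sw by auto
    ultimately have "l_TS V \<le> walk_length (tl w)" by (rule l_TS_le)
    moreover have "walk_length (tl w) < walk_length w" using \<open>tl w \<noteq> []\<close> wne
      by (cases w) (auto simp: walk_length_def)
    ultimately show False using w(3) by simp
  qed
  show "last w \<in> V"
  proof (rule ccontr)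
    assume nh: "last w \<notin> V"
    have sw: "set w = insert (last w) (set (butlast w))" using wne
      by (metis append_butlast_last_id list.simps(15) rotate1.simps(2) set_rotate1)
    have "butlast w \<noteq> []"
    proof
      assume "butlast w = []" then have "set w = {last w}" using sw by simp
      then show False using w(2) nh ne by auto
    qed
    then have "grid_walk (butlast w)" using gw_butlast w by auto
    moreover have "V \<subseteq> set (butlast w)" using w(2) nh sw by auto
    ultimately have "l_TS V \<le> walk_length (butlast w)" by (rule l_TS_le)
    moreover have "walk_length (butlast w) < walk_length w" using \<open>butlast w \<noteq> []\<close> wne
      by (cases w rule: rev_cases) (auto simp: walk_length_def)
    ultimately show False using w(3) by simp
  qed
qed

lemma block_walk:
  assumes "V \<subseteq> B" "B \<noteq> {}" "finite V"
  shows "\<exists>w. grid_walk w \<and> V \<subseteq> set w \<and> hd w \<in> B \<and> last w \<in> B \<and> walk_length w = l_TS V"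
proof (cases "V = {}")
  case True
  obtain b where "b \<in> B" using assms by auto
  then show ?thesis using True by (intro exI[of _ "[b]"]) (auto simp: l_TS_def walk_length_def)
next
  case False
  obtain w where w: "grid_walk w" "V \<subseteq> set w" "walk_length w = l_TS V"
    using l_TS_ex[OF assms(3)] by metis
  show ?thesis using opt_ends[OF w False] w assms(1) by blast
qed

lemma seq_walk:
  assumes "\<forall>i<Suc m. B i \<noteq> {} \<and> finite (V i) \<and> V i \<subseteq> B i"
    "\<forall>i. Suc i < Suc m \<longrightarrow> (\<forall>x\<in>B i. \<forall>y\<in>B (Suc i). d1 x y \<le> int D)"
  shows "\<exists>w. grid_walk w \<and> (\<Union>i<Suc m. V i) \<subseteq> set w \<and> last w \<in> B m \<and>
            walk_length w \<le> (\<Sum>i<Suc m. l_TS (V i)) + m * D"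
  using assms
proof (induction m)
  case 0
  then have "V 0 \<subseteq> B 0" "B 0 \<noteq> {}" "finite (V 0)" by auto
  from block_walk[OF this] show ?case by auto
next
  case (Suc m)
  from Suc.prems have "\<forall>i<Suc m. B i \<noteq> {} \<and> finite (V i) \<and> V i \<subseteq> B i"
    "\<forall>i. Suc i < Suc m \<longrightarrow> (\<forall>x\<in>B i. \<forall>y\<in>B (Suc i). d1 x y \<le> int D)"
    by (simp, meson less_SucI)
  from Suc.IH[OF this] obtain w where w: "grid_walk w" "(\<Union>i<Suc m. V i) \<subseteq> set w" "last w \<in> B m"
    "walk_length w \<le> (\<Sum>i<Suc m. l_TS (V i)) + m * D" by blast
  from Suc.prems have "V (Suc m) \<subseteq> B (Suc m)" "B (Suc m) \<noteq> {}" "finite (V (Suc m))" by auto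
  from block_walk[OF this] obtain u where u: "grid_walk u" "V (Suc m) \<subseteq> set u" "hd u \<in> B (Suc m)"
    "last u \<in> B (Suc m)" "walk_length u = l_TS (V (Suc m))" by blast
  obtain c where c: "grid_walk c" "hd c = last w" "last c = hd u" "walk_length c = nat (d1 (last w) (hd u))"
    using connect by metis
  have dd: "d1 (last w) (hd u) \<le> int D" using Suc.prems(2) w(3) u(3) by auto
  have ne: "w \<noteq> []" "u \<noteq> []" "c \<noteq> []" using w u c gw_nonempty by auto
  define w2 where "w2 = w @ tl c"
  have w2: "grid_walk w2" "last w2 = hd u" "set w2 = set w \<union> set c" "w2 \<noteq> []"
    "walk_length w2 = walk_length w + walk_length c"
    unfolding w2_def using gw_append[OF w(1) c(1)] c(2,3)
    last_append_tl[OF ne(3) c(2)[symmetric]] set_append_tl[OF ne(3) c(2)[symmetric] ne(1)]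
     wl_append[OF ne(1) ne(3)] ne by auto
  define w3 where "w3 = w2 @ tl u"
  have w3: "grid_walk w3" "last w3 = last u" "set w3 = set w2 \<union> set u"
    "walk_length w3 = walk_length w2 + walk_length u"
    unfolding w3_def using gw_append[OF w2(1) u(1) w2(2)]
    last_append_tl[OF ne(2) w2(2)] set_append_tl[OF ne(2) w2(2) w2(4)]
     wl_append[OF w2(4) ne(2)] by auto
  have "(\<Union>i<Suc (Suc m). V i) = (\<Union>i<Suc m. V i) \<union> V (Suc m)"
    by (simp add: lessThan_Suc Un_commute)
  then have cov: "(\<Union>i<Suc (Suc m). V i) \<subseteq> set w3" using w3 w2 w u by auto
  have "walk_length w3 \<le> (\<Sum>i<Suc m. l_TS (V i)) + m * D + D + l_TS (V (Suc m))"
    using w3 w2 w u c dd by auto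
  also have "\<dots> = (\<Sum>i<Suc (Suc m). l_TS (V i)) + Suc m * D" by simp
  finally have "walk_length w3 \<le> (\<Sum>i<Suc (Suc m). l_TS (V i)) + Suc m * D" .
  then show ?case using cov w3(1,2) u(4) by (intro exI[of _ w3]) simp
qed

lemma gw_translate: "grid_walk w \<Longrightarrow> grid_walk (map (\<lambda>x. x + t) w)"
  unfolding grid_walk_def grid_adj_def by auto

lemma l_TS_translate_le:
  assumes "finite V" shows "l_TS ((\<lambda>x. x + t) ` V) \<le> l_TS V"
proof -
  obtain w where w: "grid_walk w" "V \<subseteq> set w" "walk_length w = l_TS V"
    using l_TS_ex[OF assms] by metis
  have "l_TS ((\<lambda>x. x + t) ` V) \<le> walk_length (map (\<lambda>x. x + t) w)"
    using w by (intro l_TS_le gw_translate) auto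
  then show ?thesis using w by (simp add: walk_length_def)
qed

lemma l_TS_translate:
  assumes "finite V" shows "l_TS ((\<lambda>x. x + t) ` V) = l_TS V"
proof -
  have "V = (\<lambda>x. x + (- t)) ` ((\<lambda>x. x + t) ` V)" by (auto simp: image_image)
  then have "l_TS V \<le> l_TS ((\<lambda>x. x + t) ` V)"
    using l_TS_translate_le[of "(\<lambda>x. x + t) ` V" "-t"] assms by simp
  then show ?thesis using l_TS_translate_le[OF assms, of t] by simp
qed

lemma card_le_l_TS:
  assumes "finite V" shows "card V \<le> l_TS V + 1"
proof -
  obtain w where w: "grid_walk w" "V \<subseteq> set w" "walk_length w = l_TS V"
    using l_TS_ex[OF assms] by metis
  have "card V \<le> card (set w)" using w by (intro card_mono) auto
  also have "\<dots> \<le> length w" by (rule card_length)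
  finally show ?thesis using w gw_nonempty[OF w(1)] by (auto simp: walk_length_def)
qed



definition rw :: "nat \<Rightarrow> nat \<Rightarrow> nat" where "rw k t = t div k"
definition cl :: "nat \<Rightarrow> nat \<Rightarrow> nat" where
  "cl k t = (if even (t div k) then t mod k else k - 1 - t mod k)"
definition off :: "nat \<Rightarrow> nat \<Rightarrow> nat \<Rightarrow> int \<times> int" where
  "off n k t = (int (rw k t * n), int (cl k t * n))"
definition blk :: "nat \<Rightarrow> nat \<Rightarrow> nat \<Rightarrow> (int \<times> int) set" where
  "blk n k t = (\<lambda>x. x + off n k t) ` square n"

lemma snake_step:
  assumes "k > 0"
  shows "(rw k (Suc t) = rw k t \<and> (cl k (Suc t) = Suc (cl k t) \<or> cl k t = Suc (cl k (Suc t))))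
    \<or> (rw k (Suc t) = Suc (rw k t) \<and> cl k (Suc t) = cl k t)"
proof (cases "Suc (t mod k) = k")
  case True
  then have "Suc t mod k = 0" "Suc t div k = Suc (t div k)" by (simp_all add: mod_Suc div_Suc)
  then show ?thesis using True unfolding rw_def cl_def by auto
next
  case False
  have "t mod k < k" using assms by simp
  then have lt: "Suc (t mod k) < k" using False by simp
  then have "Suc t mod k = Suc (t mod k)" "Suc t div k = t div k" using False by (simp_all add: mod_Suc div_Suc)
  then show ?thesis using lt unfolding rw_def cl_def by auto
qed

lemma cl_lt: "k > 0 \<Longrightarrow> cl k t < k"
  unfolding cl_def by auto

lemma rw_lt: "t < k * k \<Longrightarrow> rw k t < k"
  unfolding rw_def by (simp add: less_mult_imp_div_less)

lemma mem_blk: "x \<in> blk n k t \<longleftrightarrow>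
   int (rw k t * n) \<le> fst x \<and> fst x < int (rw k t * n) + int n \<and>
   int (cl k t * n) \<le> snd x \<and> snd x < int (cl k t * n) + int n"
proof -
  have "x \<in> blk n k t \<longleftrightarrow> x - off n k t \<in> square n"
    unfolding blk_def by (auto simp: image_iff intro: bexI[of _ "x - off n k t"])
  then show ?thesis by (cases x) (auto simp: square_def off_def)
qed

lemma blk_ne: "n > 0 \<Longrightarrow> blk n k t \<noteq> {}"
  unfolding blk_def square_def by auto

lemma finite_square: "finite (square n)"
  by (simp add: square_def)

lemma finite_blk: "finite (blk n k t)"
  unfolding blk_def by (simp add: finite_square)

lemma blk_sub:
  assumes "t < k * k" shows "blk n k t \<subseteq> square (k * n)"
proof
  fix x assume x: "x \<in> blk n k t"
  have k: "k > 0" using assms by (cases k) auto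
  have r: "rw k t * n + n \<le> k * n" using rw_lt[OF assms]
    by (metis add.commute mult_Suc mult_le_mono1 Suc_leI)
  have c: "cl k t * n + n \<le> k * n" using cl_lt[OF k, of t]
    by (metis add.commute mult_Suc mult_le_mono1 Suc_leI)
  define R where "R = rw k t * n"
  define C where "C = cl k t * n"
  define K where "K = k * n"
  have r': "int R + int n \<le> int K" using r unfolding R_def K_def by linarith
  have c': "int C + int n \<le> int K" using c unfolding C_def K_def by linarith
  have xx: "int R \<le> fst x" "fst x < int R + int n" "int C \<le> snd x" "snd x < int C + int n"
    using x unfolding mem_blk R_def C_def by auto
  show "x \<in> square (k * n)" using xx r' c' unfolding square_def K_def[symmetric]
    by (cases x) auto
qed

lemma blk_adj:
  assumes "k > 0" "x \<in> blk n k t" "y \<in> blk n k (Suc t)"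
  shows "d1 x y \<le> int (3 * n)"
proof -
  define R where "R = rw k t * n"
  define C where "C = cl k t * n"
  define R' where "R' = rw k (Suc t) * n"
  define C' where "C' = cl k (Suc t) * n"
  have x: "int R \<le> fst x" "fst x < int R + int n" "int C \<le> snd x" "snd x < int C + int n"
    using assms(2) unfolding mem_blk R_def C_def by auto
  have y: "int R' \<le> fst y" "fst y < int R' + int n" "int C' \<le> snd y" "snd y < int C' + int n"
    using assms(3) unfolding mem_blk R'_def C'_def by auto
  have cases: "(R' = R \<and> (C' = C + n \<or> C = C' + n)) \<or> (R' = R + n \<and> C' = C)"
    using snake_step[OF assms(1), of t] unfolding R_def C_def R'_def C'_def by auto
  show ?thesis using x y cases unfolding d1_def by auto
qed

lemma blk_cover:
  assumes "n > 0" "k > 0"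
  shows "square (k * n) \<subseteq> (\<Union>t<k * k. blk n k t)"
proof
  fix x assume x: "x \<in> square (k * n)"
  obtain a b where ab: "x = (a, b)" by (cases x)
  have a: "0 \<le> a" "a < int (k * n)" and b: "0 \<le> b" "b < int (k * n)"
    using x ab by (auto simp: square_def)
  define r where "r = nat a div n"
  define c where "c = nat b div n"
  have rk: "r < k" unfolding r_def using a assms
    by (metis div_less_iff_less_mult nat_less_iff)
  have ck: "c < k" unfolding c_def using b assms
    by (metis div_less_iff_less_mult nat_less_iff)
  define m where "m = (if even r then c else k - 1 - c)"
  have mk: "m < k" unfolding m_def using ck by auto
  define t where "t = r * k + m"
  have tk: "t < k * k"
  proof -
    have "t < r * k + k" unfolding t_def using mk by simp
    also have "\<dots> = Suc r * k" by simp
    also have "\<dots> \<le> k * k" by (rule mult_le_mono1) (use rk in simp)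
    finally show ?thesis .
  qed
  have td: "t div k = r" "t mod k = m" unfolding t_def using mk by auto
  have rw: "rw k t = r" using td by (simp add: rw_def)
  have clt: "cl k t = c" using td ck unfolding cl_def m_def by auto
  have ra: "int (r * n) \<le> a \<and> a < int (r * n) + int n"
  proof -
    have e: "r * n + nat a mod n = nat a" unfolding r_def by (rule div_mult_mod_eq)
    have "nat a mod n < n" using assms by simp
    then have "r * n \<le> nat a" "nat a < r * n + n" using e by linarith+
    then show ?thesis using a by linarith
  qed
  have cb: "int (c * n) \<le> b \<and> b < int (c * n) + int n"
  proof -
    have e: "c * n + nat b mod n = nat b" unfolding c_def by (rule div_mult_mod_eq)
    have "nat b mod n < n" using assms by simp
    then have "c * n \<le> nat b" "nat b < c * n + n" using e by linarith+
    then show ?thesis using b by linarith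
  qed
  have "x \<in> blk n k t" unfolding mem_blk rw clt using ab ra cb by simp
  then show "x \<in> (\<Union>t<k * k. blk n k t)" using tk by blast
qed



lemma seq_bound:
  assumes "m > 0" "\<forall>i<m. B i \<noteq> {} \<and> finite (B i)"
    "\<forall>i. Suc i < m \<longrightarrow> (\<forall>x\<in>B i. \<forall>y\<in>B (Suc i). d1 x y \<le> int D)"
    "V \<subseteq> (\<Union>i<m. B i)"
  shows "l_TS V \<le> (\<Sum>i<m. l_TS (V \<inter> B i)) + (m - 1) * D"
proof -
  obtain m' where m: "m = Suc m'" using assms(1) by (cases m) auto
  have "\<forall>i<Suc m'. B i \<noteq> {} \<and> finite (V \<inter> B i) \<and> V \<inter> B i \<subseteq> B i"
    using assms(2) m by auto
  moreover have "\<forall>i. Suc i < Suc m' \<longrightarrow> (\<forall>x\<in>B i. \<forall>y\<in>B (Suc i). d1 x y \<le> int D)"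
    using assms(3) m by simp
  ultimately have "\<exists>w. grid_walk w \<and> (\<Union>i<Suc m'. V \<inter> B i) \<subseteq> set w \<and> last w \<in> B m' \<and>
            walk_length w \<le> (\<Sum>i<Suc m'. l_TS (V \<inter> B i)) + m' * D" by (rule seq_walk)
  then obtain w where w: "grid_walk w" "(\<Union>i<Suc m'. V \<inter> B i) \<subseteq> set w"
    "walk_length w \<le> (\<Sum>i<Suc m'. l_TS (V \<inter> B i)) + m' * D" by blast
  have "V \<subseteq> set w" using w(2) assms(4) m by blast
  then have "l_TS V \<le> walk_length w" using w(1) l_TS_le by blast
  then show ?thesis using w(3) m by simp
qed

lemma block_bound:
  assumes "n > 0" "k > 0" "V \<subseteq> square (k * n)"
  shows "l_TS V \<le> (\<Sum>t<k * k. l_TS (V \<inter> blk n k t)) + (k * k - 1) * (3 * n)"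
proof (rule seq_bound)
  show "0 < k * k" using assms by simp
  show "\<forall>i<k * k. blk n k i \<noteq> {} \<and> finite (blk n k i)" using blk_ne[OF assms(1)] finite_blk by auto
  show "\<forall>i. Suc i < k * k \<longrightarrow> (\<forall>x\<in>blk n k i. \<forall>y\<in>blk n k (Suc i). d1 x y \<le> int (3 * n))"
    using blk_adj[OF assms(2)] by blast
  show "V \<subseteq> (\<Union>i<k * k. blk n k i)" using blk_cover[OF assms(1,2)] assms(3) by blast
qed

lemma l_TS_mono: "V \<subseteq> W \<Longrightarrow> finite W \<Longrightarrow> l_TS V \<le> l_TS W"
  by (metis l_TS_ex l_TS_le order_trans)

definition fE :: "real \<Rightarrow> nat \<Rightarrow> real" where
  "fE p n = measure_pmf.expectation (perc p n) (\<lambda>\<omega>. real (l_TS (D_set n \<omega>)))"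

lemma integrable_Pi:
  fixes F :: "_ \<Rightarrow> real"
  assumes "finite A"
  shows "integrable (measure_pmf (Pi_pmf A False (P :: _ \<Rightarrow> bool pmf))) F"
proof (rule integrable_measure_pmf_finite)
  show "finite (set_pmf (Pi_pmf A False P))"
    by (rule finite_subset[OF set_Pi_pmf_subset'[OF assms]]) (auto intro!: finite_PiE_dflt assms)
qed

lemma marg:
  assumes "finite S" "A \<subseteq> S"
  shows "measure_pmf.expectation (Pi_pmf S False P) (\<lambda>\<omega>. F {x\<in>A. \<omega> x}) =
         measure_pmf.expectation (Pi_pmf A False P) (\<lambda>\<omega>. (F {x\<in>A. \<omega> x}::real))"
proof -
  have eq: "Pi_pmf A False P = map_pmf (\<lambda>f x. if x \<in> A then f x else False) (Pi_pmf S False P)"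
    by (rule Pi_pmf_subset[OF assms])
  have "\<And>\<omega>. {x\<in>A. (if x \<in> A then \<omega> x else False)} = {x\<in>A. \<omega> x}" by auto
  then show ?thesis unfolding eq integral_map_pmf by simp
qed

lemma transl:
  assumes "finite A"
  shows "measure_pmf.expectation (Pi_pmf ((\<lambda>x. x + (ofs::int\<times>int)) ` A) False (\<lambda>_. q)) (\<lambda>\<omega>. F {y\<in>(\<lambda>x. x + ofs) ` A. \<omega> y}) =
         measure_pmf.expectation (Pi_pmf A False (\<lambda>_. q)) (\<lambda>\<omega>. (F ((\<lambda>x. x + ofs) ` {x\<in>A. \<omega> x})::real))"
proof -
  have bij: "bij_betw (\<lambda>x. x + ofs) A ((\<lambda>x. x + ofs) ` A)"
    by (rule inj_on_imp_bij_betw) (simp add: inj_on_def)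
  have eq: "Pi_pmf A False (\<lambda>_. q) = map_pmf (\<lambda>g. g \<circ> (\<lambda>x. x + ofs)) (Pi_pmf ((\<lambda>x. x + ofs) ` A) False (\<lambda>_. q))"
    by (rule Pi_pmf_bij_betw[OF assms bij]) auto
  have "\<And>\<omega>. (\<lambda>x. x + ofs) ` {x\<in>A. \<omega> (x + ofs)} = {y\<in>(\<lambda>x. x + ofs) ` A. \<omega> y}" by auto
  then show ?thesis unfolding eq integral_map_pmf by (simp add: o_def)
qed

lemma blk_exp:
  assumes "t < k * k"
  shows "measure_pmf.expectation (perc p (k * n)) (\<lambda>\<omega>. real (l_TS (D_set (k * n) \<omega> \<inter> blk n k t))) = fE p n"
proof -
  have sub: "blk n k t \<subseteq> square (k * n)" by (rule blk_sub[OF assms])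
  have "\<And>\<omega>. D_set (k * n) \<omega> \<inter> blk n k t = {x \<in> blk n k t. \<omega> x}"
    using sub unfolding D_set_def by auto
  then have "measure_pmf.expectation (perc p (k * n)) (\<lambda>\<omega>. real (l_TS (D_set (k * n) \<omega> \<inter> blk n k t)))
      = measure_pmf.expectation (Pi_pmf (square (k * n)) False (\<lambda>_. bernoulli_pmf p))
          (\<lambda>\<omega>. real (l_TS {x \<in> blk n k t. \<omega> x}))" unfolding perc_def by simp
  also have "\<dots> = measure_pmf.expectation (Pi_pmf (blk n k t) False (\<lambda>_. bernoulli_pmf p))
          (\<lambda>\<omega>. real (l_TS {x \<in> blk n k t. \<omega> x}))"
    by (rule marg[OF finite_square sub])
  also have "\<dots> = measure_pmf.expectation (Pi_pmf (square n) False (\<lambda>_. bernoulli_pmf p))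
          (\<lambda>\<omega>. real (l_TS ((\<lambda>x. x + off n k t) ` {x \<in> square n. \<omega> x})))"
    unfolding blk_def by (rule transl[OF finite_square])
  also have "\<dots> = measure_pmf.expectation (Pi_pmf (square n) False (\<lambda>_. bernoulli_pmf p))
          (\<lambda>\<omega>. real (l_TS {x \<in> square n. \<omega> x}))"
    by (subst l_TS_translate) (auto intro: finite_subset[OF _ finite_square])
  also have "\<dots> = fE p n" unfolding fE_def perc_def D_set_def ..
  finally show ?thesis .
qed

lemma fE_mult:
  assumes "n > 0" "k > 0"
  shows "fE p (k * n) \<le> real (k * k) * (fE p n + 3 * real n)"
proof -
  let ?M = "measure_pmf (perc p (k * n))"
  have fin: "finite (square (k * n))" by (rule finite_square)
  have int: "integrable ?M F" for F :: "_ \<Rightarrow> real" unfolding perc_def by (rule integrable_Pi[OF fin])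
  have pw: "real (l_TS (D_set (k * n) \<omega>)) \<le>
     (\<Sum>t<k * k. real (l_TS (D_set (k * n) \<omega> \<inter> blk n k t))) + real (k * k) * (3 * real n)" for \<omega>
  proof -
    have "l_TS (D_set (k * n) \<omega>) \<le> (\<Sum>t<k * k. l_TS (D_set (k * n) \<omega> \<inter> blk n k t)) + (k * k - 1) * (3 * n)"
      by (rule block_bound[OF assms]) (auto simp: D_set_def)
    also have "\<dots> \<le> (\<Sum>t<k * k. l_TS (D_set (k * n) \<omega> \<inter> blk n k t)) + (k * k) * (3 * n)"
      by simp
    finally have "real (l_TS (D_set (k * n) \<omega>)) \<le> real ((\<Sum>t<k * k. l_TS (D_set (k * n) \<omega> \<inter> blk n k t)) + (k * k) * (3 * n))"
      by (rule of_nat_mono)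
    then show ?thesis by simp
  qed
  have "fE p (k * n) \<le> measure_pmf.expectation (perc p (k * n))
      (\<lambda>\<omega>. (\<Sum>t<k * k. real (l_TS (D_set (k * n) \<omega> \<inter> blk n k t))) + real (k * k) * (3 * real n))"
    unfolding fE_def by (rule integral_mono[OF int int pw])
  also have "\<dots> = (\<Sum>t<k * k. measure_pmf.expectation (perc p (k * n)) (\<lambda>\<omega>. real (l_TS (D_set (k * n) \<omega> \<inter> blk n k t))))
       + real (k * k) * (3 * real n)"
    by (subst Bochner_Integration.integral_add) (auto intro!: int simp: Bochner_Integration.integral_sum[OF int])
  also have "\<dots> = (\<Sum>t<k * k. fE p n) + real (k * k) * (3 * real n)"
    by (simp add: blk_exp)
  also have "\<dots> = real (k * k) * (fE p n + 3 * real n)" by (simp add: algebra_simps)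
  finally show ?thesis .
qed

lemma fE_mono:
  assumes "N \<le> M"
  shows "fE p N \<le> fE p M"
proof -
  have sub: "square N \<subseteq> square M" using assms unfolding square_def by auto
  have int: "integrable (measure_pmf (perc p M)) F" for F :: "_ \<Rightarrow> real"
    unfolding perc_def by (rule integrable_Pi[OF finite_square])
  have "fE p N = measure_pmf.expectation (perc p M) (\<lambda>\<omega>. real (l_TS {x \<in> square N. \<omega> x}))"
    unfolding fE_def perc_def D_set_def by (rule marg[OF finite_square sub, symmetric])
  also have "\<dots> \<le> fE p M" unfolding fE_def
  proof (rule integral_mono[OF int int])
    fix \<omega> show "real (l_TS {x \<in> square N. \<omega> x}) \<le> real (l_TS (D_set M \<omega>))"
      using sub unfolding D_set_def by (auto intro!: l_TS_mono finite_subset[OF _ finite_square])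
  qed
  finally show ?thesis .
qed

lemma fE_lower:
  assumes "0 \<le> p" "p \<le> 1"
  shows "fE p n \<ge> p * real n ^ 2 - 1"
proof -
  let ?P = "Pi_pmf (square n) False (\<lambda>_. bernoulli_pmf p)"
  have int: "integrable (measure_pmf ?P) F" for F :: "_ \<Rightarrow> real"
    by (rule integrable_Pi[OF finite_square])
  have comp: "measure_pmf.expectation ?P (\<lambda>\<omega>. of_bool (\<omega> x)) = p" if "x \<in> square n" for x
  proof -
    have "measure_pmf.expectation ?P (\<lambda>\<omega>. of_bool (\<omega> x) :: real) =
        measure_pmf.expectation (map_pmf (\<lambda>f. f x) ?P) (\<lambda>b. of_bool b)" by (rule integral_map_pmf[symmetric])
    also have "\<dots> = measure_pmf.expectation (bernoulli_pmf p) (\<lambda>b. of_bool b)"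
      by (subst Pi_pmf_component[OF finite_square]) (simp add: that)
    also have "\<dots> = p" using assms by simp
    finally show ?thesis .
  qed
  have pw: "(\<Sum>x\<in>square n. of_bool (\<omega> x)) - 1 \<le> real (l_TS (D_set n \<omega>))" for \<omega>
  proof -
    have "card (D_set n \<omega>) \<le> l_TS (D_set n \<omega>) + 1"
      by (rule card_le_l_TS) (auto simp: D_set_def intro: finite_subset[OF _ finite_square])
    moreover have "(\<Sum>x\<in>square n. of_bool (\<omega> x) :: real) = real (card (D_set n \<omega>))"
      unfolding D_set_def proof -
        have "{x \<in> square n. \<omega> x} = square n \<inter> {x. \<omega> x}" by auto
        then show "(\<Sum>x\<in>square n. of_bool (\<omega> x) :: real) = real (card {x \<in> square n. \<omega> x})"
          by (simp add: finite_square)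
      qed
    ultimately show ?thesis by linarith
  qed
  have "p * real n ^ 2 - 1 = (\<Sum>x\<in>square n. measure_pmf.expectation ?P (\<lambda>\<omega>. of_bool (\<omega> x))) - 1"
  proof -
    have "(\<Sum>x\<in>square n. measure_pmf.expectation ?P (\<lambda>\<omega>. of_bool (\<omega> x) :: real)) = (\<Sum>x\<in>square n. p)"
      by (rule sum.cong) (simp_all add: comp)
    moreover have "card (square n) = n * n" by (simp add: square_def card_cartesian_product)
    ultimately show ?thesis by (simp add: power2_eq_square)
  qed
  also have "\<dots> = measure_pmf.expectation ?P (\<lambda>\<omega>. (\<Sum>x\<in>square n. of_bool (\<omega> x)) - 1)"
    by (simp add: Bochner_Integration.integral_sum[OF int] Bochner_Integration.integral_diff[OF int int])
  also have "\<dots> \<le> fE p n" unfolding fE_def perc_def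
    by (rule integral_mono[OF int int pw])
  finally show ?thesis .
qed



lemma fE_nonneg: "0 \<le> fE p n"
  unfolding fE_def by (rule Bochner_Integration.integral_nonneg) simp

lemma key_ineq:
  assumes "N \<ge> 1" "n \<ge> 1"
  shows "fE p N / real N ^ 2 \<le> ((real N + real n) / real N) ^ 2 * (fE p n / real n ^ 2 + 3 / real n)"
proof -
  define k where "k = (N + n - 1) div n"
  have e: "k * n + (N + n - 1) mod n = N + n - 1" unfolding k_def by (rule div_mult_mod_eq)
  have "(N + n - 1) mod n < n" using assms by simp
  then have kn1: "N \<le> k * n" and kn2: "k * n \<le> N + n" using e assms by linarith+
  have kpos: "k > 0" using kn1 assms by (cases k) auto
  have "fE p N \<le> fE p (k * n)" by (rule fE_mono[OF kn1])
  also have "\<dots> \<le> real (k * k) * (fE p n + 3 * real n)" using fE_mult[of n k p] assms kpos by simp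
  finally have h1: "fE p N \<le> real (k * k) * (fE p n + 3 * real n)" .
  define b where "b = fE p n / real n ^ 2 + 3 / real n"
  have bnn: "b \<ge> 0" unfolding b_def using fE_nonneg[of p n] by simp
  have h2: "fE p n + 3 * real n = real n ^ 2 * b" unfolding b_def using assms
    by (simp add: field_simps power2_eq_square)
  have "real (k * k) * (fE p n + 3 * real n) = (real k * real n) ^ 2 * b"
    unfolding h2 by (simp add: power2_eq_square mult_ac)
  then have h3: "fE p N \<le> (real k * real n) ^ 2 * b" using h1 by simp
  have "real (k * n) \<le> real (N + n)" using kn2 by (rule of_nat_mono)
  then have "real k * real n \<le> real N + real n" by simp
  then have "(real k * real n) ^ 2 \<le> (real N + real n) ^ 2" by (rule power_mono) simp
  then have "fE p N \<le> (real N + real n) ^ 2 * b" using h3 bnn by (meson mult_right_mono order_trans)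
  then have "fE p N / real N ^ 2 \<le> (real N + real n) ^ 2 * b / real N ^ 2"
    by (rule divide_right_mono) simp
  also have "\<dots> = ((real N + real n) / real N) ^ 2 * b" by (simp add: power_divide)
  finally show ?thesis unfolding b_def .
qed

theorem main:
  fixes p :: real
  assumes "0 < p" and "p < 1"
  shows "\<exists>\<alpha>::real. \<alpha> > 0 \<and> ((\<lambda>n::nat. fE p n / (real n)^2) \<longlongrightarrow> \<alpha>) sequentially"
proof -
  define a where "a = (\<lambda>n::nat. fE p n / (real n)^2)"
  define b where "b = (\<lambda>n::nat. a n + 3 / real n)"
  define \<alpha> where "\<alpha> = (INF n\<in>{1..}. b n)"
  have bp: "b n \<ge> p" if "n \<ge> 1" for n
  proof -
    have "fE p n \<ge> p * real n ^ 2 - 1" using fE_lower[of p n] assms by simp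
    then have "(p * real n ^ 2 - 1) / real n ^ 2 \<le> a n" unfolding a_def
      by (rule divide_right_mono) simp
    moreover have "(p * real n ^ 2 - 1) / real n ^ 2 = p - 1 / real n ^ 2" using that
      by (simp add: field_simps)
    ultimately have "a n \<ge> p - 1 / real n ^ 2" by simp
    moreover have "1 / real n ^ 2 \<le> 3 / real n" using that
      by (simp add: field_simps power2_eq_square)
    ultimately show ?thesis unfolding b_def by simp
  qed
  have bdd: "bdd_below (b ` {1..})" using bp by (intro bdd_belowI[of _ p]) auto
  have ne: "{1::nat..} \<noteq> {}" by auto
  have alow: "\<alpha> \<ge> p" unfolding \<alpha>_def by (rule cINF_greatest[OF ne]) (use bp in auto)
  have ale: "\<alpha> \<le> b n" if "n \<ge> 1" for n unfolding \<alpha>_def by (rule cINF_lower[OF bdd]) (use that in auto)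
  have "a \<longlonglongrightarrow> \<alpha>"
  proof (rule order_tendstoI)
    fix y assume y: "y < \<alpha>"
    have "(\<lambda>N. \<alpha> - 3 / real N) \<longlonglongrightarrow> \<alpha> - 0"
      by (intro tendsto_diff tendsto_const lim_const_over_n)
    then have "eventually (\<lambda>N. y < \<alpha> - 3 / real N) sequentially" using y by (intro order_tendstoD(1)) auto
    then show "eventually (\<lambda>N. y < a N) sequentially"
      using eventually_ge_at_top[of "1::nat"]
    proof eventually_elim
      case (elim N)
      then show ?case using ale[of N] unfolding b_def by simp
    qed
  next
    fix y assume y: "\<alpha> < y"
    then obtain n where n: "n \<in> {1..}" "b n < y" using cINF_less_iff[OF ne bdd] unfolding \<alpha>_def by blast
    have "(\<lambda>N. ((real N + real n) / real N) ^ 2 * b n) \<longlonglongrightarrow> (1 + 0) ^ 2 * b n"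
    proof -
      have "(\<lambda>N. 1 + real n / real N) \<longlonglongrightarrow> 1 + 0"
        by (intro tendsto_add tendsto_const lim_const_over_n)
      moreover have ev: "eventually (\<lambda>N. 1 + real n / real N = (real N + real n) / real N) sequentially"
        using eventually_ge_at_top[of "1::nat"] by eventually_elim (simp add: field_simps)
      ultimately have "(\<lambda>N. (real N + real n) / real N) \<longlonglongrightarrow> 1 + 0"
        using tendsto_cong[OF ev] by blast
      then show ?thesis by (intro tendsto_mult tendsto_power tendsto_const)
    qed
    then have "eventually (\<lambda>N. ((real N + real n) / real N) ^ 2 * b n < y) sequentially"
      using n(2) by (intro order_tendstoD(2)) auto
    then show "eventually (\<lambda>N. a N < y) sequentially"
      using eventually_ge_at_top[of "1::nat"]
    proof eventually_elim
      case (elim N)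
      have "a N \<le> ((real N + real n) / real N) ^ 2 * b n"
        unfolding a_def b_def using key_ineq[of N n p] elim n(1) by simp
      then show ?case using elim by simp
    qed
  qed
  then show ?thesis using alow assms unfolding a_def by (intro exI[of _ \<alpha>]) auto
qed


theorem lemma2p3:
  fixes p :: real
  assumes "0 < p" and "p < 1"
  shows "\<exists>\<alpha>::real. \<alpha> > 0 \<and>
    ((\<lambda>n::nat. measure_pmf.expectation (perc p n) (\<lambda>\<omega>. real (l_TS (D_set n \<omega>)))
        / (real n)^2) \<longlongrightarrow> \<alpha>) sequentially"
  using main[OF assms] unfolding fE_def .

end
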